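(* Let $A$ be a finite combinatorial annulus and $r$ a $b$-weakly bounded refinement. Then $\mathrm{EEL}(rA)\le b^2\,\mathrm{EEL}(A)$.
   Context: Graphs are simple, connected, locally finite. A combinatorial annulus is the 1-skeleton (with its triangular cell structure) of a triangulated topological annulus in the plane, i.e. a region whose boundary is two disjoint Jordan curves, one enclosing the other. An edge path is a sequence of edges $[v_0,v_1],[v_1,v_2],\dots$; $\mathrm{EEL}(A)$ is the extremal length of the family of edge paths connecting the two boundary components of $A$, using metrics on edges: a metric $m:E\to[0,\infty)$ has area $\sum_e m(e)^2$, the length of a path is the sum of $m$ over its edges, and $\mathrm{EEL}=\sup_m (\inf_\gamma L_m(\gamma))^2/\mathrm{area}(m)$ over metrics of finite non-zero area. Refinement: for planar complexes $G=(V,E,F)$ and $rG=(rV,rE,rF)$, $rG$ is a refinement of $G$ if $V\subset rV$ and each edge $e=[x,y]\in E$ corresponds to a path $x=w_0,w_1,\dots,w_n=y$ in $rG$ with $[w_j,w_{j+1}]\in rE$ and $w_j\notin V$ for $0<j<n$. Write $\mathrm{eInc}_r(e)=\{[w_0,w_1],\dots,[w_{n-1},w_n]\}$. $r$ is $b$-weakly bounded if $|\mathrm{eInc}_r(e)|\le b$ for all $e\in E$. *)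

theory Defs
  imports "HOL-Analysis.Analysis"
begin

text \<open>A planar complex is a triple (V, E, F): vertices are points of the plane,
  edges are point sets (images of arcs), faces are point sets (closed cells).\<close>

type_synonym planar_complex = "complex set \<times> complex set set \<times> complex set set"

definition verts :: "planar_complex \<Rightarrow> complex set" where
  "verts G = fst G"
definition edges :: "planar_complex \<Rightarrow> complex set set" where
  "edges G = fst (snd G)"
definition faces :: "planar_complex \<Rightarrow> complex set set" where
  "faces G = snd (snd G)"

definition jordan_curve :: "(real \<Rightarrow> complex) \<Rightarrow> bool" where
  "jordan_curve g \<longleftrightarrow> simple_path g \<and> pathfinish g = pathstart g"

definition is_edge_between :: "complex set \<Rightarrow> complex set \<Rightarrow> complex \<Rightarrow> complex \<Rightarrow> bool" where
  "is_edge_between V e x y \<longleftrightarrow>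
     (\<exists>g. arc g \<and> path_image g = e \<and> pathstart g = x \<and> pathfinish g = y) \<and> e \<inter> V = {x, y}"

definition triangulated_complex :: "planar_complex \<Rightarrow> bool" where
  "triangulated_complex G \<longleftrightarrow>
     (let V = verts G; E = edges G; F = faces G in
       (\<forall>e\<in>E. \<exists>x y. is_edge_between V e x y) \<and>
       (\<forall>e1\<in>E. \<forall>e2\<in>E. e1 \<noteq> e2 \<longrightarrow> e1 \<inter> e2 \<subseteq> V) \<and>
       (\<forall>e1\<in>E. \<forall>e2\<in>E. e1 \<inter> V = e2 \<inter> V \<longrightarrow> e1 = e2) \<and>
       (\<forall>v\<in>V. \<exists>e\<in>E. v \<in> e) \<and>
       (\<forall>f\<in>F. \<exists>x y z exy eyz ezx g.
           distinct [x, y, z] \<and> exy \<in> E \<and> eyz \<in> E \<and> ezx \<in> E \<and>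
           is_edge_between V exy x y \<and> is_edge_between V eyz y z \<and>
           is_edge_between V ezx z x \<and>
           jordan_curve g \<and> path_image g = exy \<union> eyz \<union> ezx \<and>
           f = path_image g \<union> inside (path_image g)) \<and>
       (\<forall>f1\<in>F. \<forall>f2\<in>F. f1 \<noteq> f2 \<longrightarrow> interior f1 \<inter> interior f2 = {}) \<and>
       (\<forall>e\<in>E. \<forall>f\<in>F. e \<inter> interior f = {}) \<and>
       (\<forall>e\<in>E. \<exists>f\<in>F. e \<subseteq> f))"

definition comb_annulus :: "planar_complex \<Rightarrow> bool" where
  "comb_annulus A \<longleftrightarrow>
     triangulated_complex A \<and>
     finite (verts A) \<and> finite (edges A) \<and> finite (faces A) \<and>
     (\<exists>c1 c2. jordan_curve c1 \<and> jordan_curve c2 \<and>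
        path_image c1 \<subseteq> inside (path_image c2) \<and>
        \<Union>(faces A) = (path_image c2 \<union> inside (path_image c2)) - inside (path_image c1))"

definition bdry_comps :: "planar_complex \<Rightarrow> complex set set" where
  "bdry_comps A = components (frontier (\<Union>(faces A)))"

definition edge_path :: "planar_complex \<Rightarrow> complex list \<Rightarrow> complex set list \<Rightarrow> bool" where
  "edge_path G vs es \<longleftrightarrow> length vs = Suc (length es) \<and>
     (\<forall>i<length es. es ! i \<in> edges G \<and> es ! i \<inter> verts G = {vs ! i, vs ! Suc i})"

definition connecting_paths :: "planar_complex \<Rightarrow> (complex list \<times> complex set list) set" where
  "connecting_paths A = {(vs, es). edge_path A vs es \<and>
     (\<exists>C1\<in>bdry_comps A. \<exists>C2\<in>bdry_comps A. C1 \<noteq> C2 \<and> hd vs \<in> C1 \<and> last vs \<in> C2)}"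

definition path_length :: "(complex set \<Rightarrow> real) \<Rightarrow> complex set list \<Rightarrow> real" where
  "path_length m es = sum_list (map m es)"

definition metric_area :: "planar_complex \<Rightarrow> (complex set \<Rightarrow> real) \<Rightarrow> real" where
  "metric_area G m = (\<Sum>e\<in>edges G. (m e)\<^sup>2)"

definition admissible_metric :: "planar_complex \<Rightarrow> (complex set \<Rightarrow> real) \<Rightarrow> bool" where
  "admissible_metric G m \<longleftrightarrow> (\<forall>e\<in>edges G. m e \<ge> 0) \<and> metric_area G m > 0"

definition min_length :: "planar_complex \<Rightarrow> (complex set \<Rightarrow> real) \<Rightarrow> real" where
  "min_length A m = Inf {path_length m es | vs es. (vs, es) \<in> connecting_paths A}"

definition EEL :: "planar_complex \<Rightarrow> real" where
  "EEL A = Sup {(min_length A m)\<^sup>2 / metric_area A m | m. admissible_metric A m}"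

definition refines_edge :: "planar_complex \<Rightarrow> planar_complex \<Rightarrow> complex set
      \<Rightarrow> complex list \<Rightarrow> complex set list \<Rightarrow> bool" where
  "refines_edge G rG e ws res \<longleftrightarrow>
     edge_path rG ws res \<and> res \<noteq> [] \<and>
     e \<inter> verts G = {hd ws, last ws} \<and>
     (\<forall>j. 0 < j \<and> j < length res \<longrightarrow> ws ! j \<notin> verts G) \<and>
     e = \<Union>(set res)"

definition refinement :: "planar_complex \<Rightarrow> planar_complex \<Rightarrow> bool" where
  "refinement G rG \<longleftrightarrow> verts G \<subseteq> verts rG \<and> \<Union>(faces rG) = \<Union>(faces G) \<and>
     (\<forall>e\<in>edges G. \<exists>ws res. refines_edge G rG e ws res)"

definition weakly_bounded :: "nat \<Rightarrow> planar_complex \<Rightarrow> planar_complex \<Rightarrow> bool" where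
  "weakly_bounded b G rG \<longleftrightarrow>
     (\<forall>e\<in>edges G. \<forall>ws res. refines_edge G rG e ws res \<longrightarrow> card (set res) \<le> b)"

end

theory Submission
  imports Defs
begin

inductive walk :: "planar_complex \<Rightarrow> complex \<Rightarrow> complex set list \<Rightarrow> complex \<Rightarrow> bool" for G where
  wnil: "walk G a [] a"
| wcons: "e \<in> edges G \<Longrightarrow> e \<inter> verts G = {a, c} \<Longrightarrow> walk G c es b \<Longrightarrow> walk G a (e # es) b"

lemma walk_append: "walk G a xs c \<Longrightarrow> walk G c ys b \<Longrightarrow> walk G a (xs @ ys) b"
  by (induction rule: walk.induct) (auto intro: walk.intros)

lemma walk_snoc: "walk G a xs c \<Longrightarrow> e \<in> edges G \<Longrightarrow> e \<inter> verts G = {c, d} \<Longrightarrow> walk G a (xs @ [e]) d"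
  by (erule walk_append) (auto intro: walk.intros)

lemma walk_rev: "walk G a xs b \<Longrightarrow> walk G b (rev xs) a"
proof (induction rule: walk.induct)
  case (wnil a) then show ?case by (auto intro: walk.intros)
next
  case (wcons e a c es b)
  then show ?case by (auto intro!: walk_snoc simp: insert_commute)
qed

lemma walk_split: "walk G a (xs @ e # ys) b \<Longrightarrow>
   \<exists>d d'. walk G a xs d \<and> e \<in> edges G \<and> e \<inter> verts G = {d, d'} \<and> walk G d' ys b"
proof (induction xs arbitrary: a)
  case Nil
  from Nil.prems obtain c where "e \<in> edges G" "e \<inter> verts G = {a,c}" "walk G c ys b"
    by (auto elim: walk.cases)
  then show ?case by (auto intro: walk.intros)
next
  case (Cons x xs)
  from Cons.prems obtain c where "x \<in> edges G" "x \<inter> verts G = {a, c}" "walk G c (xs @ e # ys) b"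
    by (auto elim: walk.cases)
  with Cons.IH show ?case by (meson walk.wcons)
qed

lemma walk_distinct: "walk G a es b \<Longrightarrow> \<exists>es'. walk G a es' b \<and> set es' \<subseteq> set es \<and> distinct es'"
proof (induction rule: walk.induct)
  case (wnil a) then show ?case by (auto intro: walk.intros)
next
  case (wcons e a c es b)
  then obtain es' where es': "walk G c es' b" "set es' \<subseteq> set es" "distinct es'" by blast
  show ?case
  proof (cases "e \<in> set es'")
    case False
    then have "walk G a (e # es') b" "set (e # es') \<subseteq> set (e # es)" "distinct (e # es')"
      using es' wcons by (auto intro: walk.intros)
    then show ?thesis by blast
  next
    case True
    then obtain xs ys where sp: "es' = xs @ e # ys" by (meson split_list)
    from walk_split[OF es'(1)[unfolded sp]] obtain d d' where
      dd: "walk G c xs d" "e \<inter> verts G = {d, d'}" "walk G d' ys b" by blast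
    have "a = d \<or> a = d'" using dd(2) wcons(2) by auto
    then show ?thesis
    proof
      assume "a = d'"
      then have "walk G a ys b" using dd(3) by simp
      moreover have "set ys \<subseteq> set (e # es)" "distinct ys" using es' sp by auto
      ultimately show ?thesis by blast
    next
      assume ad: "a = d"
      have "walk G a (e # ys) b" using ad dd(2) walk.wcons[OF wcons(1) _ dd(3)] by simp
      moreover have "set (e # ys) \<subseteq> set (e # es)" "distinct (e # ys)" using es' sp by auto
      ultimately show ?thesis by blast
    qed
  qed
qed

lemma edge_path_walk: "edge_path G vs es \<Longrightarrow> walk G (hd vs) es (last vs)"
proof (induction es arbitrary: vs)
  case Nil
  then obtain v where "vs = [v]" by (cases vs) (auto simp: edge_path_def)
  then show ?case by (auto intro: walk.intros)
next
  case (Cons e es)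
  then obtain v vs' where vs: "vs = v # vs'" by (cases vs) (auto simp: edge_path_def)
  have len: "length vs' = Suc (length es)" using Cons.prems vs by (simp add: edge_path_def)
  have "\<forall>i<length es. es ! i \<in> edges G \<and> es ! i \<inter> verts G = {vs' ! i, vs' ! Suc i}"
  proof (intro allI impI)
    fix i assume "i < length es"
    then have "Suc i < length (e#es)" by simp
    then have "(e#es) ! Suc i \<in> edges G \<and> (e#es) ! Suc i \<inter> verts G = {vs ! Suc i, vs ! Suc (Suc i)}"
      using Cons.prems unfolding edge_path_def by blast
    then show "es ! i \<in> edges G \<and> es ! i \<inter> verts G = {vs' ! i, vs' ! Suc i}" using vs by simp
  qed
  then have "edge_path G vs' es" using len unfolding edge_path_def by blast
  then have w: "walk G (hd vs') es (last vs')" by (rule Cons.IH)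
  have "0 < length (e#es)" by simp
  then have "(e#es) ! 0 \<in> edges G \<and> (e#es) ! 0 \<inter> verts G = {vs ! 0, vs ! Suc 0}"
    using Cons.prems unfolding edge_path_def by blast
  then have e: "e \<in> edges G" "e \<inter> verts G = {v, vs' ! 0}" using vs by auto
  have "vs' \<noteq> []" using len by auto
  then have "hd vs' = vs' ! 0" by (simp add: hd_conv_nth)
  then have "walk G v (e # es) (last vs')" using walk.wcons[OF e(1) e(2)] w by simp
  then show ?case using vs \<open>vs' \<noteq> []\<close> by simp
qed

lemma walk_edge_path: "walk G a es b \<Longrightarrow> \<exists>vs. edge_path G vs es \<and> hd vs = a \<and> last vs = b"
proof (induction rule: walk.induct)
  case (wnil a)
  then show ?case by (intro exI[of _ "[a]"]) (auto simp: edge_path_def)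
next
  case (wcons e a c es b)
  then obtain vs where vs: "edge_path G vs es" "hd vs = c" "last vs = b" by blast
  then have ne: "vs \<noteq> []" by (auto simp: edge_path_def)
  have L: "length (a # vs) = Suc (length (e # es))" using vs by (simp add: edge_path_def)
  have "\<forall>i<length (e # es). (e # es) ! i \<in> edges G \<and> (e # es) ! i \<inter> verts G = {(a # vs) ! i, (a # vs) ! Suc i}"
  proof (intro allI impI)
    fix i assume i: "i < length (e # es)"
    show "(e # es) ! i \<in> edges G \<and> (e # es) ! i \<inter> verts G = {(a # vs) ! i, (a # vs) ! Suc i}"
    proof (cases i)
      case 0
      have "vs ! 0 = c" using vs(2) ne by (simp add: hd_conv_nth)
      then show ?thesis using 0 wcons.hyps(1,2) by simp
    next
      case (Suc j) then show ?thesis using vs i by (simp add: edge_path_def)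
    qed
  qed
  then have "edge_path G (a # vs) (e # es)" using L unfolding edge_path_def by blast
  then show ?case using vs ne by auto
qed

lemma lift:
  fixes m :: "complex set \<Rightarrow> real"
  assumes R: "\<forall>e\<in>edges A. refines_edge A rA e (W e) (Rs e)" and m: "\<forall>e\<in>edges rA. 0 \<le> m e"
  shows "walk A a es b \<Longrightarrow> \<exists>es'. walk rA a es' b \<and>
           sum_list (map m es') \<le> sum_list (map (\<lambda>e. sum m (set (Rs e))) es)"
proof (induction rule: walk.induct)
  case (wnil a) show ?case by (intro exI[of _ "[]"]) (auto intro: walk.intros)
next
  case (wcons e a c es b)
  from wcons.IH obtain es' where es': "walk rA c es' b"
     "sum_list (map m es') \<le> sum_list (map (\<lambda>e. sum m (set (Rs e))) es)" by blast
  have re: "refines_edge A rA e (W e) (Rs e)" using R wcons.hyps(1) by blast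
  hence ep: "edge_path rA (W e) (Rs e)" and ev: "e \<inter> verts A = {hd (W e), last (W e)}"
    by (auto simp: refines_edge_def)
  from walk_distinct[OF edge_path_walk[OF ep]] obtain r where
    r: "walk rA (hd (W e)) r (last (W e))" "set r \<subseteq> set (Rs e)" "distinct r" by blast
  have sub: "set (Rs e) \<subseteq> edges rA" using ep by (auto simp: edge_path_def in_set_conv_nth)
  have "{a, c} = {hd (W e), last (W e)}" using ev wcons.hyps(2) by simp
  then have "(a = hd (W e) \<and> c = last (W e)) \<or> (a = last (W e) \<and> c = hd (W e))"
    by (auto simp: doubleton_eq_iff)
  then have "\<exists>r'. walk rA a r' c \<and> set r' \<subseteq> set (Rs e) \<and> distinct r'"
  proof
    assume "a = hd (W e) \<and> c = last (W e)"
    then show ?thesis using r by blast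
  next
    assume "a = last (W e) \<and> c = hd (W e)"
    then show ?thesis using r walk_rev[OF r(1)] by (intro exI[of _ "rev r"]) auto
  qed
  then obtain r' where r': "walk rA a r' c" "set r' \<subseteq> set (Rs e)" "distinct r'" by blast
  have "sum_list (map m r') = sum m (set r')" using r'(3) by (rule sum_list_distinct_conv_sum_set)
  also have "\<dots> \<le> sum m (set (Rs e))"
    by (rule sum_mono2) (use r'(2) sub m in auto)
  finally have le: "sum_list (map m r') \<le> sum m (set (Rs e))" .
  have "walk rA a (r' @ es') b" by (rule walk_append[OF r'(1) es'(1)])
  moreover have "sum_list (map m (r' @ es')) \<le> sum_list (map (\<lambda>e. sum m (set (Rs e))) (e # es))"
    using le es'(2) by simp
  ultimately show ?case by blast
qed

lemma area_bound:
  assumes fin: "finite (edges A)" "finite (edges rA)"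
  and sub: "\<forall>e\<in>edges A. S e \<subseteq> edges rA" and card: "\<forall>e\<in>edges A. card (S e) \<le> b"
  and disj: "\<forall>e1\<in>edges A. \<forall>e2\<in>edges A. e1 \<noteq> e2 \<longrightarrow> S e1 \<inter> S e2 = {}"
  shows "metric_area A (\<lambda>e. sum m (S e)) \<le> real b * metric_area rA m"
proof -
  have finS: "\<forall>e\<in>edges A. finite (S e)" using sub fin(2) finite_subset by blast
  have "metric_area A (\<lambda>e. sum m (S e)) = (\<Sum>e\<in>edges A. (sum m (S e))\<^sup>2)"
    by (simp add: metric_area_def)
  also have "\<dots> \<le> (\<Sum>e\<in>edges A. real b * (\<Sum>x\<in>S e. (m x)\<^sup>2))"
  proof (rule sum_mono)
    fix e assume e: "e \<in> edges A"
    have "(sum m (S e))\<^sup>2 \<le> (\<Sum>x\<in>S e. (m x)\<^sup>2) * card (S e)"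
      by (rule sum_squared_le_sum_of_squares)
    also have "\<dots> \<le> (\<Sum>x\<in>S e. (m x)\<^sup>2) * real b"
      by (rule mult_left_mono) (use card e in \<open>auto simp: sum_nonneg\<close>)
    finally show "(sum m (S e))\<^sup>2 \<le> real b * (\<Sum>x\<in>S e. (m x)\<^sup>2)" by (simp add: mult.commute)
  qed
  also have "\<dots> = real b * (\<Sum>e\<in>edges A. (\<Sum>x\<in>S e. (m x)\<^sup>2))"
    by (simp add: sum_distrib_left)
  also have "(\<Sum>e\<in>edges A. (\<Sum>x\<in>S e. (m x)\<^sup>2)) = (\<Sum>x\<in>\<Union>(S ` edges A). (m x)\<^sup>2)"
    by (rule sum.UNION_disjoint[symmetric]) (use fin finS disj in auto)
  also have "\<dots> \<le> (\<Sum>x\<in>edges rA. (m x)\<^sup>2)"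
    by (rule sum_mono2) (use fin sub in auto)
  finally show ?thesis
    by (simp add: metric_area_def mult_left_mono)
qed

lemma min_length_nonneg:
  assumes "connecting_paths G \<noteq> {}" "\<forall>e\<in>edges G. 0 \<le> m e"
  shows "0 \<le> min_length G m"
  unfolding min_length_def
proof (rule cInf_greatest)
  show "{path_length m es |vs es. (vs, es) \<in> connecting_paths G} \<noteq> {}" using assms(1) by auto
next
  fix x assume "x \<in> {path_length m es |vs es. (vs, es) \<in> connecting_paths G}"
  then obtain vs es where "x = path_length m es" "edge_path G vs es"
    by (auto simp: connecting_paths_def)
  then show "0 \<le> x" using assms(2)
    by (auto simp: path_length_def edge_path_def in_set_conv_nth intro!: sum_list_nonneg)
qed

lemma min_length_le:
  assumes "(vs, es) \<in> connecting_paths G" "\<forall>e\<in>edges G. 0 \<le> m e"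
  shows "min_length G m \<le> path_length m es"
  unfolding min_length_def
proof (rule cInf_lower)
  show "path_length m es \<in> {path_length m es |vs es. (vs, es) \<in> connecting_paths G}" using assms(1) by auto
  show "bdd_below {path_length m es |vs es. (vs, es) \<in> connecting_paths G}"
  proof (rule bdd_belowI[of _ 0])
    fix x assume "x \<in> {path_length m es |vs es. (vs, es) \<in> connecting_paths G}"
    then obtain vs es where "x = path_length m es" "edge_path G vs es"
      by (auto simp: connecting_paths_def)
    then show "0 \<le> x" using assms(2)
      by (auto simp: path_length_def edge_path_def in_set_conv_nth intro!: sum_list_nonneg)
  qed
qed

lemma cp_edges: "(vs, es) \<in> connecting_paths G \<Longrightarrow> set es \<subseteq> edges G"
  by (auto simp: connecting_paths_def edge_path_def in_set_conv_nth)

lemma path_length_bound: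
  assumes "set es \<subseteq> edges G" "finite (edges G)" "\<forall>e\<in>edges G. 0 \<le> m e"
  shows "path_length m es \<le> real (length es) * sqrt (metric_area G m)"
proof -
  have "\<forall>e\<in>set es. m e \<le> sqrt (metric_area G m)"
  proof
    fix e assume e: "e \<in> set es"
    have "(m e)\<^sup>2 \<le> metric_area G m" unfolding metric_area_def
      by (rule member_le_sum[where f="\<lambda>e. (m e)\<^sup>2"]) (use e assms in auto)
    then show "m e \<le> sqrt (metric_area G m)" using real_le_rsqrt by blast
  qed
  then have "sum_list (map m es) \<le> sum_list (map (\<lambda>_. sqrt (metric_area G m)) es)"
    by (intro sum_list_mono) auto
  then show ?thesis by (simp add: path_length_def sum_list_triv)
qed

lemma EEL_props:
  assumes cp: "(vs0, es0) \<in> connecting_paths G" and fin: "finite (edges G)" and ne: "edges G \<noteq> {}"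
  defines "SG \<equiv> {(min_length G m)\<^sup>2 / metric_area G m | m. admissible_metric G m}"
  shows "bdd_above SG" "SG \<noteq> {}" "\<forall>x\<in>SG. 0 \<le> x"
proof -
  let ?L = "real (length es0)"
  show "bdd_above SG"
  proof (rule bdd_aboveI[of _ "?L\<^sup>2"])
    fix x assume "x \<in> SG"
    then obtain m where x: "x = (min_length G m)\<^sup>2 / metric_area G m" and adm: "admissible_metric G m"
      unfolding SG_def by blast
    have m0: "\<forall>e\<in>edges G. 0 \<le> m e" and a: "metric_area G m > 0" using adm by (auto simp: admissible_metric_def)
    have n0: "0 \<le> min_length G m" using min_length_nonneg[OF _ m0] cp by auto
    have "min_length G m \<le> ?L * sqrt (metric_area G m)"
      using min_length_le[OF cp m0] path_length_bound[OF cp_edges[OF cp] fin m0] by linarith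
    then have "(min_length G m)\<^sup>2 \<le> (?L * sqrt (metric_area G m))\<^sup>2"
      using n0 by (rule power_mono)
    also have "\<dots> = ?L\<^sup>2 * metric_area G m" using a by (simp add: power_mult_distrib)
    finally show "x \<le> ?L\<^sup>2" using a by (simp add: x pos_divide_le_eq)
  qed
  have "admissible_metric G (\<lambda>_. 1)" using fin ne
    by (auto simp: admissible_metric_def metric_area_def card_gt_0_iff)
  then show "SG \<noteq> {}" unfolding SG_def by blast
  show "\<forall>x\<in>SG. 0 \<le> x" unfolding SG_def admissible_metric_def by auto
qed

lemma conn_unbounded_outside:
  fixes S T :: "'a::real_normed_vector set"
  assumes "connected T" "\<not> bounded T" "T \<inter> S = {}"
  shows "T \<subseteq> outside S"
proof
  fix x assume x: "x \<in> T"
  have "T \<subseteq> connected_component_set (- S) x"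
    by (rule connected_component_maximal) (use assms x in auto)
  then have "\<not> bounded (connected_component_set (- S) x)" using assms(2) bounded_subset by blast
  then show "x \<in> outside S" by (simp add: outside)
qed

lemma jordan_not_in_arc:
  assumes "jordan_curve c" "arc g" "path_image c \<subseteq> path_image g"
  shows False
proof -
  have sc: "simple_path c" "pathfinish c = pathstart c" using assms(1) by (auto simp: jordan_curve_def)
  have ins: "inside (path_image c) \<noteq> {}" using Jordan_inside_outside[OF sc] by blast
  obtain h where hom: "homeomorphism {0..1} (path_image g) g h" using homeomorphism_arc[OF assms(2)] by blast
  have hcont: "continuous_on (path_image g) h" and hg: "\<forall>y\<in>path_image g. g (h y) = y"
    and himg: "h ` path_image g = {0..1}"
    using hom by (auto simp: homeomorphism_def)
  define K where "K = h ` path_image c"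
  have cK: "compact K" unfolding K_def
    by (rule compact_continuous_image[OF continuous_on_subset[OF hcont assms(3)]])
       (rule compact_simple_path_image[OF sc(1)])
  have conK: "connected K" unfolding K_def
    by (rule connected_continuous_image[OF continuous_on_subset[OF hcont assms(3)]])
       (simp add: connected_simple_path_image sc(1))
  obtain s t where st: "K = {s..t}" using cK conK connected_compact_interval_1 by blast
  have K01: "K \<subseteq> {0..1}" unfolding K_def using himg assms(3) by blast
  have PK: "path_image c = g ` K"
  proof -
    have "g ` K = (\<lambda>y. g (h y)) ` path_image c" unfolding K_def by (simp add: image_image)
    also have "\<dots> = path_image c" using hg assms(3) by (auto intro!: image_cong[THEN trans] simp: subset_iff) 
    finally show ?thesis by simp
  qed
  show False
  proof (cases "s < t")
    case True
    have s01: "s \<in> {0..1}" "t \<in> {0..1}" using K01 st True by auto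
    have "arc (subpath s t g)" using arc_subpath_arc[OF assms(2) s01] True by simp
    moreover have "path_image (subpath s t g) = path_image c"
      using True PK st by (simp add: path_image_subpath)
    ultimately show False using inside_arc_empty ins by metis
  next
    case False
    then have "K = {} \<or> K = {s}" using st by auto
    then have "convex (path_image c)" using PK by auto
    then show False using inside_convex ins by blast
  qed
qed

lemma conn_in_one_edge:
  assumes "connected P" "P \<subseteq> \<Union>E" "finite E" "\<forall>e\<in>E. closed e"
    "\<forall>e1\<in>E. \<forall>e2\<in>E. e1 \<noteq> e2 \<longrightarrow> e1 \<inter> e2 \<subseteq> V" "P \<inter> V = {}" "p \<in> P"
  shows "\<exists>e\<in>E. P \<subseteq> e"
proof -
  obtain e0 where e0: "e0 \<in> E" "p \<in> e0" using assms(2,7) by blast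
  define B where "B = \<Union>(E - {e0})"
  have cB: "closed B" unfolding B_def using assms(3,4) by (intro closed_Union) auto
  have cover: "P \<subseteq> e0 \<union> B" using assms(2) unfolding B_def by blast
  have dis: "e0 \<inter> B \<inter> P = {}"
  proof -
    have "e0 \<inter> B \<subseteq> V" unfolding B_def using assms(5) e0(1) by blast
    then show ?thesis using assms(6) by blast
  qed
  have "e0 \<inter> P \<noteq> {}" using e0 assms(7) by blast
  then have "B \<inter> P = {}"
    using assms(1) cB assms(4) e0(1) cover dis unfolding connected_closed by blast
  then show ?thesis using cover e0(1) by blast
qed


lemma walk_single: "e \<in> edges G \<Longrightarrow> e \<inter> verts G = {a, b} \<Longrightarrow> walk G a [e] b"
  by (rule walk.wcons[OF _ _ walk.wnil])

lemma tri_all: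
  assumes "triangulated_complex G"
  shows "(\<forall>e\<in>edges G. \<exists>x y. is_edge_between (verts G) e x y) \<and>
       (\<forall>e1\<in>edges G. \<forall>e2\<in>edges G. e1 \<noteq> e2 \<longrightarrow> e1 \<inter> e2 \<subseteq> verts G) \<and>
       (\<forall>e1\<in>edges G. \<forall>e2\<in>edges G. e1 \<inter> verts G = e2 \<inter> verts G \<longrightarrow> e1 = e2) \<and>
       (\<forall>v\<in>verts G. \<exists>e\<in>edges G. v \<in> e) \<and>
       (\<forall>f\<in>faces G. \<exists>x y z exy eyz ezx g.
           distinct [x, y, z] \<and> exy \<in> edges G \<and> eyz \<in> edges G \<and> ezx \<in> edges G \<and>
           is_edge_between (verts G) exy x y \<and> is_edge_between (verts G) eyz y z \<and>
           is_edge_between (verts G) ezx z x \<and>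
           jordan_curve g \<and> path_image g = exy \<union> eyz \<union> ezx \<and>
           f = path_image g \<union> inside (path_image g)) \<and>
       (\<forall>f1\<in>faces G. \<forall>f2\<in>faces G. f1 \<noteq> f2 \<longrightarrow> interior f1 \<inter> interior f2 = {}) \<and>
       (\<forall>e\<in>edges G. \<forall>f\<in>faces G. e \<inter> interior f = {}) \<and>
       (\<forall>e\<in>edges G. \<exists>f\<in>faces G. e \<subseteq> f)"
  using assms unfolding triangulated_complex_def Let_def .

lemmas tri_E = tri_all[THEN conjunct1]
lemmas tri_disj = tri_all[THEN conjunct2, THEN conjunct1]
lemmas tri_V = tri_all[THEN conjunct2, THEN conjunct2, THEN conjunct2, THEN conjunct1]
lemmas tri_F = tri_all[THEN conjunct2, THEN conjunct2, THEN conjunct2, THEN conjunct2, THEN conjunct1]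
lemmas tri_int = tri_all[THEN conjunct2, THEN conjunct2, THEN conjunct2, THEN conjunct2, THEN conjunct2, THEN conjunct1]
lemmas tri_eint = tri_all[THEN conjunct2, THEN conjunct2, THEN conjunct2, THEN conjunct2, THEN conjunct2, THEN conjunct2, THEN conjunct1]
lemmas tri_EF = tri_all[THEN conjunct2, THEN conjunct2, THEN conjunct2, THEN conjunct2, THEN conjunct2, THEN conjunct2, THEN conjunct2]

lemma face_props:
  assumes tri: "triangulated_complex A" and f: "f \<in> faces A"
  shows "\<exists>T. (\<forall>p\<in>T. \<exists>e\<in>edges A. p \<in> e \<and> e \<subseteq> f) \<and> f = T \<union> inside T \<and> open (inside T) \<and> inside T \<subseteq> interior f
            \<and> closed f \<and> f \<inter> verts A \<noteq> {} \<and>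
            (\<forall>r\<in>f \<inter> verts A. \<forall>r'\<in>f \<inter> verts A. \<exists>es. walk A r es r')"
proof -
  let ?V = "verts A" and ?E = "edges A"
  note tV = tri_V[OF tri] and teint = tri_eint[OF tri] and tF = tri_F[OF tri]
  have "\<exists>x y z exy eyz ezx g.
           distinct [x, y, z] \<and> exy \<in> ?E \<and> eyz \<in> ?E \<and> ezx \<in> ?E \<and>
           is_edge_between ?V exy x y \<and> is_edge_between ?V eyz y z \<and>
           is_edge_between ?V ezx z x \<and>
           jordan_curve g \<and> path_image g = exy \<union> eyz \<union> ezx \<and>
           f = path_image g \<union> inside (path_image g)" using tF f by (rule bspec)
  then obtain x y z exy eyz ezx g where H:
    "distinct [x, y, z] \<and> exy \<in> ?E \<and> eyz \<in> ?E \<and> ezx \<in> ?E \<and>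
           is_edge_between ?V exy x y \<and> is_edge_between ?V eyz y z \<and>
           is_edge_between ?V ezx z x \<and>
           jordan_curve g \<and> path_image g = exy \<union> eyz \<union> ezx \<and>
           f = path_image g \<union> inside (path_image g)" by (elim exE)
  then have fx:
    "exy \<in> ?E" "eyz \<in> ?E" "ezx \<in> ?E"
    "is_edge_between ?V exy x y" "is_edge_between ?V eyz y z" "is_edge_between ?V ezx z x"
    "jordan_curve g" "path_image g = exy \<union> eyz \<union> ezx"
    "f = path_image g \<union> inside (path_image g)" by simp_all
  define T where "T = path_image g"
  have sc: "simple_path g" "pathfinish g = pathstart g" using fx(7) by (auto simp: jordan_curve_def)
  note J = Jordan_inside_outside[OF sc]
  have TE: "\<forall>p\<in>T. \<exists>e\<in>?E. p \<in> e \<and> e \<subseteq> f" using fx unfolding T_def by blast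
  have fT: "f = T \<union> inside T" using fx(9) T_def by simp
  have oi: "open (inside T)" using J T_def by simp
  have ii: "inside T \<subseteq> interior f" using oi fT by (intro interior_maximal) auto
  have "closure (inside T) = inside T \<union> T" using J T_def by (simp add: closure_Un_frontier)
  then have cf: "closed f" using fT by (metis closed_closure sup_commute)
  have vx: "exy \<inter> ?V = {x, y}" "eyz \<inter> ?V = {y, z}" "ezx \<inter> ?V = {z, x}"
    using fx(4-6) by (auto simp: is_edge_between_def)
  have "x \<in> f" using vx(1) fx(8) fT T_def by blast
  moreover have "x \<in> ?V" using vx(1) by blast
  ultimately have ne: "f \<inter> ?V \<noteq> {}" by blast
  have fV: "f \<inter> ?V \<subseteq> {x, y, z}"
  proof
    fix r assume r: "r \<in> f \<inter> ?V"
    obtain e where e: "e \<in> ?E" "r \<in> e" using tV r by blast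
    have "r \<notin> inside T" using teint e f ii by blast
    then have "r \<in> T" using r fT by blast
    then show "r \<in> {x, y, z}" using r vx fx(8) T_def by blast
  qed
  have w: "walk A x [exy] y" "walk A y [exy] x" "walk A y [eyz] z" "walk A z [eyz] y"
          "walk A z [ezx] x" "walk A x [ezx] z" "walk A x [] x" "walk A y [] y" "walk A z [] z"
    using fx(1-3) vx by (simp_all add: walk_single walk.wnil insert_commute)
  have "\<forall>r\<in>f \<inter> ?V. \<forall>r'\<in>f \<inter> ?V. \<exists>es. walk A r es r'"
  proof (intro ballI)
    fix r r' assume "r \<in> f \<inter> ?V" "r' \<in> f \<inter> ?V"
    then have "r \<in> {x, y, z}" "r' \<in> {x, y, z}" using fV by blast+
    then show "\<exists>es. walk A r es r'" using w by blast
  qed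
  then show ?thesis using TE fT oi ii cf ne by blast
qed

lemma edge_path_edges: "edge_path G vs es \<Longrightarrow> set es \<subseteq> edges G"
  by (auto simp: edge_path_def in_set_conv_nth)

lemma arc_infinite: "arc g \<Longrightarrow> infinite (path_image g)"
proof
  assume a: "arc g" and f: "finite (path_image g)"
  have "inj_on g {0..1}" using a by (simp add: arc_def)
  then have "finite {0..(1::real)}" using f by (simp add: path_image_def finite_image_iff)
  then show False using infinite_Icc[of "0::real" 1] by simp
qed

lemma annulus_cp:
  assumes ca: "comb_annulus A"
  shows "\<exists>vs es. (vs, es) \<in> connecting_paths A \<and> es \<noteq> []"
proof -
  let ?V = "verts A" and ?E = "edges A" and ?F = "faces A"
  have tri: "triangulated_complex A" and finE: "finite ?E" and finF: "finite ?F"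
    using ca unfolding comb_annulus_def by blast+
  have "\<exists>c1 c2. jordan_curve c1 \<and> jordan_curve c2 \<and>
        path_image c1 \<subseteq> inside (path_image c2) \<and>
        \<Union>(faces A) = (path_image c2 \<union> inside (path_image c2)) - inside (path_image c1)"
    using ca unfolding comb_annulus_def by blast
  then obtain c1 c2 where jc: "jordan_curve c1" "jordan_curve c2"
    and sub12: "path_image c1 \<subseteq> inside (path_image c2)"
    and RU: "\<Union>?F = (path_image c2 \<union> inside (path_image c2)) - inside (path_image c1)"
    by blast
  define P1 where "P1 = path_image c1"
  define P2 where "P2 = path_image c2"
  have sc1: "simple_path c1" "pathfinish c1 = pathstart c1" using jc(1) by (auto simp: jordan_curve_def)
  have sc2: "simple_path c2" "pathfinish c2 = pathstart c2" using jc(2) by (auto simp: jordan_curve_def)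
  note J1 = Jordan_inside_outside[OF sc1, folded P1_def]
  note J2 = Jordan_inside_outside[OF sc2, folded P2_def]
  have oi1: "open (inside P1)" and oo1: "open (outside P1)" and fi1: "frontier (inside P1) = P1"
    and fo1: "frontier (outside P1) = P1" and io1: "inside P1 \<inter> outside P1 = {}"
    and co1: "connected (outside P1)" using J1 by auto
  have oi2: "open (inside P2)" and oo2: "open (outside P2)" and fi2: "frontier (inside P2) = P2"
    and fo2: "frontier (outside P2) = P2" and io2: "inside P2 \<inter> outside P2 = {}"
    and co2: "connected (outside P2)" and ci2: "connected (inside P2)"
    and ub2: "\<not> bounded (outside P2)" using J2 by auto
  have cl1: "closed P1" using compact_simple_path_image[OF sc1(1)] P1_def compact_imp_closed by blast
  have cl2: "closed P2" using compact_simple_path_image[OF sc2(1)] P2_def compact_imp_closed by blast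
  have sub12': "P1 \<subseteq> inside P2" using sub12 P1_def P2_def by simp
  have P12: "P1 \<inter> P2 = {}" using sub12' inside_no_overlap by blast
  have a: "P2 \<union> outside P2 \<subseteq> outside P1"
  proof (rule conn_unbounded_outside)
    have "closure (outside P2) = P2 \<union> outside P2" by (simp add: closure_Un_frontier fo2 sup_commute)
    then show "connected (P2 \<union> outside P2)" using connected_imp_connected_closure[OF co2] by simp
    show "\<not> bounded (P2 \<union> outside P2)" using ub2 bounded_subset by blast
    show "(P2 \<union> outside P2) \<inter> P1 = {}" using sub12' io2 inside_no_overlap[of P2] by blast
  qed
  have ins12: "inside P1 \<subseteq> inside P2"
  proof
    fix x assume x: "x \<in> inside P1"
    then have "x \<notin> outside P1" using io1 by blast
    then have "x \<notin> P2 \<union> outside P2" using a by blast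
    then show "x \<in> inside P2" using inside_Un_outside[of P2] by blast
  qed
  define R where "R = \<Union>?F"
  have R_eq: "R = (- outside P2) \<inter> (- inside P1)"
    by (simp add: R_def RU outside_inside Diff_eq P1_def P2_def)
  have closedR: "closed R" unfolding R_eq using oo2 oi1 by (intro closed_Int closed_Compl)
  have P1R: "P1 \<subseteq> R" unfolding R_def RU using sub12' inside_no_overlap[of P1] P1_def P2_def by blast
  have P2R: "P2 \<subseteq> R" unfolding R_def RU using ins12 inside_no_overlap[of P2] P1_def P2_def by blast
  have connR: "connected R"
  proof -
    have e1: "- outside P2 = closure (inside P2)"
      by (simp add: closure_Un_frontier fi2 outside_inside sup_commute)
    have e2: "- inside P1 = closure (outside P1)"
      by (simp add: closure_Un_frontier fo1 inside_outside sup_commute)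
    have "connected (- outside P2 \<inter> - inside P1)"
    proof (rule unicoherentD[OF unicoherent_UNIV])
      show "connected (- outside P2)" unfolding e1 by (rule connected_imp_connected_closure[OF ci2])
      show "connected (- inside P1)" unfolding e2 by (rule connected_imp_connected_closure[OF co1])
      show "UNIV = - outside P2 \<union> - inside P1" using ins12 io2 by blast
      show "closedin (top_of_set UNIV) (- outside P2)" using oo2 by (simp add: closed_closedin[symmetric] closed_Compl)
      show "closedin (top_of_set UNIV) (- inside P1)" using oi1 by (simp add: closed_closedin[symmetric] closed_Compl)
    qed
    then show ?thesis using R_eq by simp
  qed
  have intR1: "interior R \<inter> inside P1 = {}" using interior_subset[of R] R_eq by blast
  have intR2: "interior R \<inter> outside P2 = {}" using interior_subset[of R] R_eq by blast
  have frontR: "frontier R \<subseteq> P1 \<union> P2"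
  proof
    fix p assume p: "p \<in> frontier R"
    have pR: "p \<in> R" using p closedR frontier_subset_closed by blast
    have pi: "p \<notin> interior R" using p by (simp add: frontier_def)
    show "p \<in> P1 \<union> P2"
    proof (rule ccontr)
      assume "p \<notin> P1 \<union> P2"
      then have "p \<in> inside P2 \<inter> outside P1"
        using pR R_eq outside_inside[of P2] inside_outside[of P1] by blast
      moreover have "inside P2 \<inter> outside P1 \<subseteq> R" using R_eq io2 io1 by blast
      moreover have "open (inside P2 \<inter> outside P1)" using oi2 oo1 by blast
      ultimately have "p \<in> interior R" using interior_maximal by blast
      then show False using pi by blast
    qed
  qed
  have P1fr: "P1 \<subseteq> frontier R"
  proof
    fix p assume p: "p \<in> P1"
    have "p \<in> closure (inside P1)" using p fi1 by (simp add: closure_Un_frontier)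
    moreover have "interior R \<inter> closure (inside P1) = {}"
      using open_Int_closure_eq_empty[OF open_interior] intR1 by blast
    ultimately have "p \<notin> interior R" by blast
    then show "p \<in> frontier R" using p P1R closure_subset[of R] by (auto simp: frontier_def)
  qed
  have P2fr: "P2 \<subseteq> frontier R"
  proof
    fix p assume p: "p \<in> P2"
    have "p \<in> closure (outside P2)" using p fo2 by (simp add: closure_Un_frontier)
    moreover have "interior R \<inter> closure (outside P2) = {}"
      using open_Int_closure_eq_empty[OF open_interior] intR2 by blast
    ultimately have "p \<notin> interior R" by blast
    then show "p \<in> frontier R" using p P2R closure_subset[of R] by (auto simp: frontier_def)
  qed
  have notint: "p \<in> \<Union>?E" if pR: "p \<in> R" and pI: "p \<notin> interior R" for p
  proof -
    obtain f where f: "f \<in> ?F" "p \<in> f" using pR R_def by blast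
    obtain T where T: "\<forall>p\<in>T. \<exists>e\<in>?E. p \<in> e \<and> e \<subseteq> f" "f = T \<union> inside T" "open (inside T)"
      using face_props[OF tri f(1)] by blast
    have "inside T \<subseteq> R" using T(2) f(1) R_def by blast
    then have "inside T \<subseteq> interior R" using T(3) interior_maximal by blast
    then have "p \<in> T" using pI f(2) T(2) by blast
    then show ?thesis using T(1) by blast
  qed
  have tE: "\<forall>e\<in>?E. \<exists>x y. is_edge_between ?V e x y" by (rule tri_E[OF tri])
  have Eclosed: "\<forall>e\<in>?E. closed e"
  proof
    fix e assume "e \<in> ?E"
    then obtain x y where "is_edge_between ?V e x y" using tE by blast
    then obtain g where "arc g" "path_image g = e" by (auto simp: is_edge_between_def)
    then show "closed e" using compact_arc_image compact_imp_closed by blast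
  qed
  have vert: "P \<inter> ?V \<noteq> {}" if jc: "jordan_curve c" and P: "P = path_image c" and Pf: "P \<subseteq> frontier R" for c P
  proof
    assume PV: "P \<inter> ?V = {}"
    have scc: "simple_path c" using jc by (simp add: jordan_curve_def)
    have "P \<subseteq> \<Union>?E"
    proof
      fix p assume "p \<in> P"
      then have "p \<in> frontier R" using Pf by blast
      then show "p \<in> \<Union>?E" using notint closedR frontier_subset_closed by (auto simp: frontier_def)
    qed
    moreover have "connected P" using P scc connected_simple_path_image by blast
    moreover have "pathstart c \<in> P" using P pathstart_in_path_image by blast
    ultimately obtain e where e: "e \<in> ?E" "P \<subseteq> e"
      using conn_in_one_edge[OF _ _ finE Eclosed tri_disj[OF tri] PV] by blast
    obtain x y where "is_edge_between ?V e x y" using tE e(1) by blast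
    then obtain g where "arc g" "path_image g = e" by (auto simp: is_edge_between_def)
    then show False using jordan_not_in_arc[OF jc] e(2) P by blast
  qed
  obtain u where u: "u \<in> P1" "u \<in> ?V" using vert[OF jc(1) P1_def P1fr] by blast
  obtain w where w: "w \<in> P2" "w \<in> ?V" using vert[OF jc(2) P2_def P2fr] by blast
  define Reach where "Reach = {v \<in> ?V. \<exists>es. walk A u es v}"
  have reach_face: "f \<inter> ?V \<subseteq> Reach" if f: "f \<in> ?F" "f \<inter> Reach \<noteq> {}" for f
  proof
    fix r' assume r': "r' \<in> f \<inter> ?V"
    obtain r where r: "r \<in> f" "r \<in> ?V" "\<exists>es. walk A u es r" using f(2) Reach_def by blast
    obtain T where "\<forall>r\<in>f \<inter> ?V. \<forall>r'\<in>f \<inter> ?V. \<exists>es. walk A r es r'"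
      using face_props[OF tri f(1)] by blast
    then obtain es' where "walk A r es' r'" using r r' by blast
    moreover obtain es where "walk A u es r" using r(3) by blast
    ultimately have "walk A u (es @ es') r'" using walk_append by blast
    then show "r' \<in> Reach" using r' Reach_def by blast
  qed
  have eV: "e \<inter> ?V \<noteq> {}" if eE: "e \<in> ?E" for e
  proof -
    obtain x y where "is_edge_between ?V e x y" using tE eE by blast
    then show ?thesis by (auto simp: is_edge_between_def)
  qed
  have meet: "f1 \<inter> f2 \<inter> ?V \<noteq> {}" if f: "f1 \<in> ?F" "f2 \<in> ?F" "f1 \<inter> f2 \<noteq> {}" for f1 f2
  proof (cases "f1 = f2")
    case True
    then show ?thesis using face_props[OF tri f(1)] by blast
  next
    case False
    obtain p where p: "p \<in> f1" "p \<in> f2" using f(3) by blast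
    obtain T1 where T1: "\<forall>p\<in>T1. \<exists>e\<in>?E. p \<in> e \<and> e \<subseteq> f1" "f1 = T1 \<union> inside T1" "inside T1 \<subseteq> interior f1"
      using face_props[OF tri f(1)] by blast
    obtain T2 where T2: "\<forall>p\<in>T2. \<exists>e\<in>?E. p \<in> e \<and> e \<subseteq> f2" "f2 = T2 \<union> inside T2" "inside T2 \<subseteq> interior f2"
      using face_props[OF tri f(2)] by blast
    have ii: "interior f1 \<inter> interior f2 = {}" using tri_int[OF tri] f False by blast
    have ei: "\<forall>e\<in>?E. e \<inter> interior f1 = {} \<and> e \<inter> interior f2 = {}" using tri_eint[OF tri] f by blast
    have pT1: "p \<in> T1"
    proof (rule ccontr)
      assume "p \<notin> T1"
      then have pi1: "p \<in> interior f1" using p(1) T1(2,3) by blast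
      show False
      proof (cases "p \<in> T2")
        case True then show False using T2(1) ei pi1 by blast
      next
        case False then show False using p(2) T2(2,3) ii pi1 by blast
      qed
    qed
    have pT2: "p \<in> T2"
    proof (rule ccontr)
      assume "p \<notin> T2"
      then have pi2: "p \<in> interior f2" using p(2) T2(2,3) by blast
      show False using pT1 T1(1) ei pi2 by blast
    qed
    obtain e1 where e1: "e1 \<in> ?E" "p \<in> e1" "e1 \<subseteq> f1" using T1(1) pT1 by blast
    obtain e2 where e2: "e2 \<in> ?E" "p \<in> e2" "e2 \<subseteq> f2" using T2(1) pT2 by blast
    show ?thesis
    proof (cases "e1 = e2")
      case True
      then show ?thesis using eV[OF e1(1)] e1(3) e2(3) by blast
    next
      case False
      then have "p \<in> ?V" using tri_disj[OF tri] e1 e2 by blast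
      then show ?thesis using p by blast
    qed
  qed
  define X where "X = \<Union>{f \<in> ?F. f \<inter> Reach \<noteq> {}}"
  define Y where "Y = \<Union>{f \<in> ?F. f \<inter> Reach = {}}"
  have fclosed: "\<forall>f\<in>?F. closed f" using face_props[OF tri] by blast
  have cX: "closed X" unfolding X_def using finF fclosed by (intro closed_Union) auto
  have cY: "closed Y" unfolding Y_def using finF fclosed by (intro closed_Union) auto
  have RXY: "R \<subseteq> X \<union> Y" unfolding R_def X_def Y_def by blast
  have XY: "X \<inter> Y = {}"
  proof (rule ccontr)
    assume "X \<inter> Y \<noteq> {}"
    then obtain f1 f2 where f1: "f1 \<in> ?F" "f1 \<inter> Reach \<noteq> {}" and f2: "f2 \<in> ?F" "f2 \<inter> Reach = {}"
      and "f1 \<inter> f2 \<noteq> {}" unfolding X_def Y_def by blast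
    then obtain a where "a \<in> f1" "a \<in> f2" "a \<in> ?V" using meet by blast
    then show False using reach_face[OF f1] f2(2) by blast
  qed
  have uReach: "u \<in> Reach" unfolding Reach_def using u(2) walk.wnil by blast
  obtain eu where eu: "eu \<in> ?E" "u \<in> eu" using tri_V[OF tri] u(2) by blast
  obtain fu where fu: "fu \<in> ?F" "eu \<subseteq> fu" using tri_EF[OF tri] eu(1) by blast
  have "u \<in> X" unfolding X_def using fu eu uReach by blast
  then have "X \<inter> R \<noteq> {}" using u(1) P1R by blast
  then have YR: "Y \<inter> R = {}"
    using connR cX cY RXY XY unfolding connected_closed by blast
  obtain ew where ew: "ew \<in> ?E" "w \<in> ew" using tri_V[OF tri] w(2) by blast
  obtain fw where fw: "fw \<in> ?F" "ew \<subseteq> fw" using tri_EF[OF tri] ew(1) by blast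
  have "fw \<inter> Reach \<noteq> {}"
  proof
    assume "fw \<inter> Reach = {}"
    then have "w \<in> Y" unfolding Y_def using fw ew by blast
    then show False using YR w(1) P2R by blast
  qed
  then have "w \<in> Reach" using reach_face[OF fw(1)] fw ew w(2) by blast
  then obtain es where wk: "walk A u es w" unfolding Reach_def by blast
  have uw: "u \<noteq> w" using u(1) w(1) P12 by blast
  have esne: "es \<noteq> []"
  proof
    assume "es = []"
    then show False using wk uw by (auto elim: walk.cases)
  qed
  obtain vs where vs: "edge_path A vs es" "hd vs = u" "last vs = w"
    using walk_edge_path[OF wk] by blast
  define C1 where "C1 = connected_component_set (frontier R) u"
  define C2 where "C2 = connected_component_set (frontier R) w"
  have uf: "u \<in> frontier R" using u(1) P1fr by blast
  have wf: "w \<in> frontier R" using w(1) P2fr by blast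
  have C1c: "C1 \<in> bdry_comps A" unfolding bdry_comps_def C1_def R_def[symmetric] components_iff using uf by blast
  have C2c: "C2 \<in> bdry_comps A" unfolding bdry_comps_def C2_def R_def[symmetric] components_iff using wf by blast
  have uC1: "u \<in> C1" unfolding C1_def using connected_component_refl[OF uf] by simp
  have wC2: "w \<in> C2" unfolding C2_def using connected_component_refl[OF wf] by simp
  have "C1 \<subseteq> P1 \<union> P2" using frontR connected_component_subset[of "frontier R" u] C1_def by blast
  moreover have "connected C1" unfolding C1_def by simp
  moreover have "P1 \<inter> C1 \<noteq> {}" using uC1 u(1) by blast
  moreover have "P1 \<inter> P2 \<inter> C1 = {}" using P12 by blast
  ultimately have "P2 \<inter> C1 = {}" using cl1 cl2 unfolding connected_closed by blast
  then have "w \<notin> C1" using w(1) by blast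
  then have "C1 \<noteq> C2" using wC2 by blast
  then have "(vs, es) \<in> connecting_paths A"
    unfolding connecting_paths_def using vs C1c C2c uC1 wC2 by blast
  then show ?thesis using esne by blast
qed

theorem mainTheorem4:
  fixes A rA :: planar_complex and b :: nat
  assumes "comb_annulus A"
    and "comb_annulus rA"
    and "refinement A rA"
    and "weakly_bounded b A rA"
  shows "EEL rA \<le> (real b)\<^sup>2 * EEL A"
proof -
  from assms(3) have Vsub: "verts A \<subseteq> verts rA" and U: "\<Union>(faces rA) = \<Union>(faces A)"
    and ref: "\<forall>e\<in>edges A. \<exists>ws res. refines_edge A rA e ws res"
    by (auto simp: refinement_def)
  define W where "W e = fst (SOME p. refines_edge A rA e (fst p) (snd p))" for e
  define Rs where "Rs e = snd (SOME p. refines_edge A rA e (fst p) (snd p))" for e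
  have R: "\<forall>e\<in>edges A. refines_edge A rA e (W e) (Rs e)"
  proof
    fix e assume "e \<in> edges A"
    then obtain ws res where "refines_edge A rA e ws res" using ref by blast
    then have "refines_edge A rA e (fst (ws,res)) (snd (ws,res))" by simp
    then have "refines_edge A rA e (fst (SOME p. refines_edge A rA e (fst p) (snd p)))
                  (snd (SOME p. refines_edge A rA e (fst p) (snd p)))"
      by (rule someI[where P="\<lambda>p. refines_edge A rA e (fst p) (snd p)"])
    then show "refines_edge A rA e (W e) (Rs e)" by (simp add: W_def Rs_def)
  qed
  define S where "S e = set (Rs e)" for e
  have finA: "finite (edges A)" and finR: "finite (edges rA)"
    using assms(1,2) by (auto simp: comb_annulus_def)
  have Ssub: "\<forall>e\<in>edges A. S e \<subseteq> edges rA"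
    using R by (auto simp: S_def refines_edge_def dest!: edge_path_edges)
  have Scard: "\<forall>e\<in>edges A. card (S e) \<le> b"
    using assms(4) R by (auto simp: weakly_bounded_def S_def)
  have triA: "\<forall>e1\<in>edges A. \<forall>e2\<in>edges A. e1 \<noteq> e2 \<longrightarrow> e1 \<inter> e2 \<subseteq> verts A"
    using assms(1) by (simp add: comb_annulus_def triangulated_complex_def Let_def)
  have triR: "\<forall>e\<in>edges rA. \<exists>x y. is_edge_between (verts rA) e x y"
    using assms(2) by (simp add: comb_annulus_def triangulated_complex_def Let_def)
  have Sdisj: "\<forall>e1\<in>edges A. \<forall>e2\<in>edges A. e1 \<noteq> e2 \<longrightarrow> S e1 \<inter> S e2 = {}"
  proof (intro ballI impI)
    fix e1 e2 assume e: "e1 \<in> edges A" "e2 \<in> edges A" "e1 \<noteq> e2"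
    show "S e1 \<inter> S e2 = {}"
    proof (rule ccontr)
      assume "S e1 \<inter> S e2 \<noteq> {}"
      then obtain x where x: "x \<in> S e1" "x \<in> S e2" by blast
      have "e1 = \<Union>(S e1)" "e2 = \<Union>(S e2)" using R e by (auto simp: refines_edge_def S_def)
      then have "x \<subseteq> e1 \<inter> e2" using x by blast
      then have xV: "x \<subseteq> verts rA" using triA e Vsub by blast
      have "x \<in> edges rA" using Ssub x e by blast
      then obtain p q where "is_edge_between (verts rA) x p q" using triR by blast
      then obtain g where g: "arc g" "path_image g = x" and xpq: "x \<inter> verts rA = {p, q}"
        by (auto simp: is_edge_between_def)
      have "x = {p, q}" using xV xpq by blast
      then show False using arc_infinite[OF g(1)] g(2) by simp
    qed
  qed
  obtain vs0 es0 where cp0: "(vs0, es0) \<in> connecting_paths A" "es0 \<noteq> []"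
    using annulus_cp[OF assms(1)] by blast
  have es0E: "set es0 \<subseteq> edges A" using cp_edges[OF cp0(1)] .
  have neA: "edges A \<noteq> {}" using es0E cp0(2) by (cases es0) auto
  have bc: "bdry_comps rA = bdry_comps A" by (simp add: bdry_comps_def U)
  have liftcp: "\<exists>vs' es'. (vs', es') \<in> connecting_paths rA \<and>
                   path_length m es' \<le> path_length (\<lambda>e. sum m (S e)) es"
    if m: "\<forall>e\<in>edges rA. 0 \<le> m e" and cp: "(vs, es) \<in> connecting_paths A" for m :: "complex set \<Rightarrow> real" and vs es
  proof -
    from cp have ep: "edge_path A vs es" and
      comp: "\<exists>C1\<in>bdry_comps A. \<exists>C2\<in>bdry_comps A. C1 \<noteq> C2 \<and> hd vs \<in> C1 \<and> last vs \<in> C2"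
      by (auto simp: connecting_paths_def)
    obtain es' where w: "walk rA (hd vs) es' (last vs)"
      and le: "sum_list (map m es') \<le> sum_list (map (\<lambda>e. sum m (set (Rs e))) es)"
      using lift[OF R m edge_path_walk[OF ep]] by blast
    obtain vs' where vs': "edge_path rA vs' es'" "hd vs' = hd vs" "last vs' = last vs"
      using walk_edge_path[OF w] by blast
    have "(vs', es') \<in> connecting_paths rA"
      using vs' comp bc by (auto simp: connecting_paths_def)
    moreover have "path_length m es' \<le> path_length (\<lambda>e. sum m (S e)) es"
      using le by (simp add: path_length_def S_def)
    ultimately show ?thesis by blast
  qed
  have neR: "edges rA \<noteq> {}"
  proof -
    obtain e where e: "e \<in> edges A" using neA by blast
    then have "Rs e \<noteq> []" using R by (auto simp: refines_edge_def)
    then have "S e \<noteq> {}" by (simp add: S_def)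
    then show ?thesis using Ssub e by blast
  qed
  have cpR: "connecting_paths rA \<noteq> {}"
    using liftcp[of "\<lambda>_. 1", OF _ cp0(1)] by auto
  define SA where "SA = {(min_length A m)\<^sup>2 / metric_area A m | m. admissible_metric A m}"
  have bddA: "bdd_above SA" and neSA: "SA \<noteq> {}" and nnSA: "\<forall>x\<in>SA. 0 \<le> x"
    using EEL_props[OF cp0(1) finA neA] unfolding SA_def by auto
  have EA: "EEL A = Sup SA" by (simp add: EEL_def SA_def)
  have EA0: "0 \<le> EEL A"
  proof -
    obtain x where "x \<in> SA" using neSA by blast
    then show ?thesis using nnSA cSup_upper[OF _ bddA] EA by fastforce
  qed
  have "EEL rA = Sup {(min_length rA m)\<^sup>2 / metric_area rA m | m. admissible_metric rA m}"
    by (simp add: EEL_def)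
  also have "\<dots> \<le> (real b)\<^sup>2 * EEL A"
  proof (rule cSup_least)
    have "admissible_metric rA (\<lambda>_. 1)" using finR neR
      by (auto simp: admissible_metric_def metric_area_def card_gt_0_iff)
    then show "{(min_length rA m)\<^sup>2 / metric_area rA m | m. admissible_metric rA m} \<noteq> {}" by blast
  next
    fix x assume "x \<in> {(min_length rA m)\<^sup>2 / metric_area rA m | m. admissible_metric rA m}"
    then obtain m where x: "x = (min_length rA m)\<^sup>2 / metric_area rA m"
      and adm: "admissible_metric rA m" by blast
    have m0: "\<forall>e\<in>edges rA. 0 \<le> m e" and aR: "metric_area rA m > 0"
      using adm by (auto simp: admissible_metric_def)
    define M where "M = (\<lambda>e. sum m (S e))"
    have M0: "\<forall>e\<in>edges A. 0 \<le> M e"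
      using Ssub m0 by (auto simp: M_def intro!: sum_nonneg)
    have area: "metric_area A M \<le> real b * metric_area rA m"
      unfolding M_def by (rule area_bound[OF finA finR Ssub Scard Sdisj])
    have minR0: "0 \<le> min_length rA m" by (rule min_length_nonneg[OF cpR m0])
    have "min_length rA m \<le> Inf {path_length M es |vs es. (vs, es) \<in> connecting_paths A}"
    proof (rule cInf_greatest)
      show "{path_length M es |vs es. (vs, es) \<in> connecting_paths A} \<noteq> {}" using cp0 by blast
    next
      fix y assume "y \<in> {path_length M es |vs es. (vs, es) \<in> connecting_paths A}"
      then obtain vs es where y: "y = path_length M es" and cp: "(vs, es) \<in> connecting_paths A" by blast
      obtain vs' es' where "(vs', es') \<in> connecting_paths rA" "path_length m es' \<le> y"
        using liftcp[OF m0 cp] y unfolding M_def by blast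
      then show "min_length rA m \<le> y" using min_length_le[OF _ m0] by fastforce
    qed
    then have minle: "min_length rA m \<le> min_length A M" by (simp add: min_length_def)
    show "x \<le> (real b)\<^sup>2 * EEL A"
    proof (cases "metric_area A M = 0")
      case True
      have "\<forall>e\<in>edges A. (M e)\<^sup>2 = 0"
        using True finA by (simp add: metric_area_def sum_nonneg_eq_0_iff)
      then have Mz: "\<forall>e\<in>edges A. M e = 0" by simp
      have "path_length M es0 = 0"
        using Mz es0E unfolding path_length_def by (induction es0) auto
      then have "min_length A M \<le> 0" using min_length_le[OF cp0(1) M0] by simp
      then have "min_length rA m = 0" using minle minR0 by simp
      then have "x = 0" using x by simp
      then show ?thesis using EA0 by simp
    next
      case False
      have aM: "metric_area A M > 0"
        using False M0 by (simp add: metric_area_def sum_nonneg less_le)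
      then have admA: "admissible_metric A M" using M0 by (simp add: admissible_metric_def)
      define y where "y = (min_length A M)\<^sup>2 / metric_area A M"
      have "y \<in> SA" using admA unfolding SA_def y_def by blast
      then have yle: "y \<le> EEL A" using cSup_upper[OF _ bddA] EA by simp
      have bpos: "real b > 0"
      proof (rule ccontr)
        assume "\<not> real b > 0" then have "real b = 0" by simp
        then show False using area aM by simp
      qed
      then have b1: "real b \<le> (real b)\<^sup>2"
        by (simp add: power2_eq_square)
      have "x \<le> (min_length A M)\<^sup>2 / metric_area rA m"
        unfolding x by (rule divide_right_mono) (use minR0 minle aR power_mono in auto)
      also have "\<dots> \<le> real b * y"
      proof -
        have "1 / metric_area rA m \<le> real b / metric_area A M"
          using area aR aM by (simp add: divide_simps mult.commute)
        then have "(min_length A M)\<^sup>2 * (1 / metric_area rA m) \<le> (min_length A M)\<^sup>2 * (real b / metric_area A M)"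
          by (rule mult_left_mono) simp
        then show ?thesis by (simp add: y_def mult.commute)
      qed
      also have "\<dots> \<le> real b * EEL A" using yle bpos by simp
      also have "\<dots> \<le> (real b)\<^sup>2 * EEL A" using b1 EA0 by (rule mult_right_mono)
      finally show ?thesis .
    qed
  qed
  finally show ?thesis .
qed

end
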